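(* Let $\phi(s)=c_0s+\sum_{n\ge1}c_n n^{-s}$, where $c_0\in\mathbb{N}_0$, the $c_n$ are complex numbers, and $\phi$ is non-constant. If $\operatorname{Re}c_1\ge\sum_{n\ge2}|c_n|$, then the composition operator $C_\phi f=f\circ\phi$ is bounded on $\mathcal{A}^+$; if $\operatorname{Re}c_1>\sum_{n\ge2}|c_n|$, then $C_\phi$ is compact on $\mathcal{A}^+$.
   Context: The Wiener–Dirichlet algebra $\mathcal{A}^+$ is the set of functions $f(s)=\sum_{n\ge1}a_n n^{-s}$ with $\|f\|_{\mathcal{A}^+}=\sum_{n\ge1}|a_n|<\infty$, viewed as functions on $\{\operatorname{Re}s\ge0\}$; it is a commutative unital Banach algebra under pointwise multiplication. $\mathbb{N}_0=\{0,1,2,\dots\}$. *)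

theory Defs
  imports "HOL-Analysis.Analysis"
begin

definition dirichlet_val :: "(nat \<Rightarrow> complex) \<Rightarrow> complex \<Rightarrow> complex" where
  "dirichlet_val a s = (\<Sum>\<^sub>\<infinity>n\<in>{1..}. a n * (of_nat n :: complex) powr (- s))"

definition wd_rep :: "(nat \<Rightarrow> complex) \<Rightarrow> (complex \<Rightarrow> complex) \<Rightarrow> bool" where
  "wd_rep a f \<longleftrightarrow> (\<lambda>n. norm (a n)) summable_on {1..} \<and>
     (\<forall>s. 0 \<le> Re s \<longrightarrow> f s = dirichlet_val a s)"

definition wd_algebra :: "(complex \<Rightarrow> complex) set" where
  "wd_algebra = {f. \<exists>a. wd_rep a f}"

text \<open>Norm: sum of the absolute values of the Dirichlet coefficients (taken as an
  infimum over representing coefficient sequences, which are in fact unique).\<close>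
definition wd_norm :: "(complex \<Rightarrow> complex) \<Rightarrow> real" where
  "wd_norm f = Inf {(\<Sum>\<^sub>\<infinity>n\<in>{1..}. norm (a n)) | a. wd_rep a f}"

definition symbol_phi :: "nat \<Rightarrow> (nat \<Rightarrow> complex) \<Rightarrow> complex \<Rightarrow> complex" where
  "symbol_phi c0 c s = of_nat c0 * s + dirichlet_val c s"

definition comp_op_bounded :: "(complex \<Rightarrow> complex) \<Rightarrow> bool" where
  "comp_op_bounded \<phi> \<longleftrightarrow>
     (\<forall>f\<in>wd_algebra. f \<circ> \<phi> \<in> wd_algebra) \<and>
     (\<exists>C. \<forall>f\<in>wd_algebra. wd_norm (f \<circ> \<phi>) \<le> C * wd_norm f)"

text \<open>C_phi f = f \<circ> phi is compact on A+: it maps A+ into A+ and the image of the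
  closed unit ball is relatively compact, i.e. every sequence in the unit ball has a
  subsequence whose images converge in A+.\<close>
definition comp_op_compact :: "(complex \<Rightarrow> complex) \<Rightarrow> bool" where
  "comp_op_compact \<phi> \<longleftrightarrow>
     (\<forall>f\<in>wd_algebra. f \<circ> \<phi> \<in> wd_algebra) \<and>
     (\<forall>F :: nat \<Rightarrow> complex \<Rightarrow> complex.
        (\<forall>k. F k \<in> wd_algebra \<and> wd_norm (F k) \<le> 1) \<longrightarrow>
        (\<exists>r g. strict_mono r \<and> g \<in> wd_algebra \<and>
           (\<lambda>k. wd_norm (\<lambda>s. (F (r k) \<circ> \<phi>) s - g s)) \<longlonglongrightarrow> 0))"

end

theory Submission
  imports Defs
begin


lemma group_infsum:
  fixes g :: "'i \<Rightarrow> 'c::banach" and lam :: "'i \<Rightarrow> nat"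
  assumes sg: "g summable_on I" and pos: "\<And>i. i\<in>I \<Longrightarrow> lam i \<ge> 1"
  shows "(\<lambda>n. \<Sum>\<^sub>\<infinity>i\<in>{i\<in>I. lam i = n}. g i) summable_on {1..}"
    and "infsum g I = (\<Sum>\<^sub>\<infinity>n\<in>{1..}. \<Sum>\<^sub>\<infinity>i\<in>{i\<in>I. lam i = n}. g i)"
proof -
  define S where "S = Sigma {1..} (\<lambda>n. {i\<in>I. lam i = n})"
  have inj: "inj_on snd S" unfolding S_def by (auto simp: inj_on_def)
  have img: "snd ` S = I" unfolding S_def using pos by (force simp: image_iff)
  have s2: "(g \<circ> snd) summable_on S"
    using summable_on_reindex[OF inj, of g] sg img by simp
  have eq: "(\<lambda>(n::nat,i). g i) = g \<circ> snd" by (auto simp: fun_eq_iff)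
  have s3: "(\<lambda>(n,i). g i) summable_on S" using s2 eq by simp
  have sub: "\<And>n. (\<lambda>i. g i) summable_on {i\<in>I. lam i = n}"
    by (rule summable_on_subset_banach[OF sg]) auto
  show "(\<lambda>n. \<Sum>\<^sub>\<infinity>i\<in>{i\<in>I. lam i = n}. g i) summable_on {1..}"
    using summable_on_Sigma_banach[of "\<lambda>n i. g i" "{1..}" "\<lambda>n. {i\<in>I. lam i = n}"] s3
    unfolding S_def by simp
  have "infsum g I = infsum (g \<circ> snd) S"
    using infsum_reindex[OF inj, of g] img by simp
  also have "\<dots> = infsum (\<lambda>(n,i). g i) S" using eq by simp
  also have "\<dots> = (\<Sum>\<^sub>\<infinity>n\<in>{1..}. \<Sum>\<^sub>\<infinity>i\<in>{i\<in>I. lam i = n}. g i)"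
    using infsum_Sigma'_banach[of "\<lambda>n i. g i" "{1..}" "\<lambda>n. {i\<in>I. lam i = n}"] s3
    unfolding S_def by simp
  finally show "infsum g I = (\<Sum>\<^sub>\<infinity>n\<in>{1..}. \<Sum>\<^sub>\<infinity>i\<in>{i\<in>I. lam i = n}. g i)" .
qed

lemma norm_nat_powr_le1:
  assumes "n \<ge> 1" "0 \<le> Re s"
  shows "norm ((of_nat n :: complex) powr (- s)) \<le> 1"
proof -
  have "norm ((of_nat n :: complex) powr (- s)) = real n powr (- Re s)"
    by (subst norm_powr_real_powr) auto
  also have "\<dots> \<le> 1" using assms by (simp add: powr_minus_divide ge_one_powr_ge_zero)
  finally show ?thesis .
qed

lemma rep_from_family:
  fixes w :: "'i \<Rightarrow> complex" and lam :: "'i \<Rightarrow> nat"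
  assumes abs: "(\<lambda>i. norm (w i)) summable_on I"
    and pos: "\<And>i. i\<in>I \<Longrightarrow> lam i \<ge> 1"
    and h: "\<And>s. 0 \<le> Re s \<Longrightarrow> h s = (\<Sum>\<^sub>\<infinity>i\<in>I. w i * of_nat (lam i) powr (-s))"
  shows "h \<in> wd_algebra \<and> wd_norm h \<le> (\<Sum>\<^sub>\<infinity>i\<in>I. norm (w i))"
proof -
  define a where "a n = (\<Sum>\<^sub>\<infinity>i\<in>{i\<in>I. lam i = n}. w i)" for n
  have sw: "w summable_on I" using abs summable_on_iff_abs_summable_on_complex by blast
  have subn: "\<And>n. (\<lambda>i. norm (w i)) summable_on {i\<in>I. lam i = n}"
    by (rule summable_on_subset_banach[OF abs]) auto
  have na: "norm (a n) \<le> (\<Sum>\<^sub>\<infinity>i\<in>{i\<in>I. lam i = n}. norm (w i))" for n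
    unfolding a_def by (rule norm_infsum_bound) (use subn in auto)
  have gr1: "(\<lambda>n. \<Sum>\<^sub>\<infinity>i\<in>{i\<in>I. lam i = n}. norm (w i)) summable_on {1..}"
    using group_infsum(1)[of "\<lambda>i. norm (w i)" I lam] abs pos by blast
  have gr2: "(\<Sum>\<^sub>\<infinity>i\<in>I. norm (w i)) = (\<Sum>\<^sub>\<infinity>n\<in>{1..}. \<Sum>\<^sub>\<infinity>i\<in>{i\<in>I. lam i = n}. norm (w i))"
    using group_infsum(2)[of "\<lambda>i. norm (w i)" I lam] abs pos by blast
  have sa: "(\<lambda>n. norm (a n)) summable_on {1..}"
    by (rule summable_on_comparison_test[OF gr1]) (use na in auto)
  have rep: "wd_rep a h"
    unfolding wd_rep_def
  proof (intro conjI allI impI sa)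
    fix s :: complex assume s: "0 \<le> Re s"
    have sws: "(\<lambda>i. w i * of_nat (lam i) powr (-s)) summable_on I"
      unfolding summable_on_iff_abs_summable_on_complex
      by (rule summable_on_comparison_test[OF abs])
         (use norm_nat_powr_le1[OF pos s] in \<open>auto simp: norm_mult intro: mult_left_le\<close>)
    have "h s = (\<Sum>\<^sub>\<infinity>i\<in>I. w i * of_nat (lam i) powr (-s))" using h s by simp
    also have "\<dots> = (\<Sum>\<^sub>\<infinity>n\<in>{1..}. \<Sum>\<^sub>\<infinity>i\<in>{i\<in>I. lam i = n}. w i * of_nat (lam i) powr (-s))"
      using group_infsum(2)[of "\<lambda>i. w i * of_nat (lam i) powr (-s)" I lam] sws pos by blast
    also have "\<dots> = (\<Sum>\<^sub>\<infinity>n\<in>{1..}. a n * of_nat n powr (-s))"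
    proof (rule infsum_cong)
      fix n :: nat assume "n \<in> {1..}"
      have "(\<Sum>\<^sub>\<infinity>i\<in>{i\<in>I. lam i = n}. w i * of_nat (lam i) powr (-s))
          = (\<Sum>\<^sub>\<infinity>i\<in>{i\<in>I. lam i = n}. w i * of_nat n powr (-s))"
        by (rule infsum_cong) auto
      also have "\<dots> = a n * of_nat n powr (-s)" unfolding a_def by (rule infsum_cmult_left')
      finally show "(\<Sum>\<^sub>\<infinity>i\<in>{i\<in>I. lam i = n}. w i * of_nat (lam i) powr (-s)) = a n * of_nat n powr (-s)" .
    qed
    finally show "h s = dirichlet_val a s" unfolding dirichlet_val_def .
  qed
  have "(\<Sum>\<^sub>\<infinity>n\<in>{1..}. norm (a n)) \<le> (\<Sum>\<^sub>\<infinity>n\<in>{1..}. \<Sum>\<^sub>\<infinity>i\<in>{i\<in>I. lam i = n}. norm (w i))"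
    by (rule infsum_mono[OF sa gr1]) (use na in auto)
  also have "\<dots> = (\<Sum>\<^sub>\<infinity>i\<in>I. norm (w i))" using gr2 by simp
  finally have le: "(\<Sum>\<^sub>\<infinity>n\<in>{1..}. norm (a n)) \<le> (\<Sum>\<^sub>\<infinity>i\<in>I. norm (w i))" .
  have "wd_norm h \<le> (\<Sum>\<^sub>\<infinity>n\<in>{1..}. norm (a n))"
    unfolding wd_norm_def
    by (rule cInf_lower) (use rep in \<open>auto intro!: bdd_belowI[where m=0] infsum_nonneg\<close>)
  with le rep show ?thesis unfolding wd_algebra_def by auto
qed




lemma nat_powr_exp:
  assumes "n > 0" shows "(of_nat n::complex) powr z = exp (z * of_real (ln (real n)))"
  using assms by (simp add: powr_def)

lemma nat_powr_mult:
  assumes "a > 0" "b > 0"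
  shows "(of_nat (a*b)::complex) powr z = of_nat a powr z * of_nat b powr z"
  unfolding nat_powr_exp[OF mult_pos_pos[OF assms]] nat_powr_exp[OF assms(1)] nat_powr_exp[OF assms(2)]
  using assms by (simp add: ln_mult distrib_left exp_add)

lemma nat_powr_prod:
  assumes "finite A" "\<And>j. j\<in>A \<Longrightarrow> f j > 0"
  shows "(of_nat (\<Prod>j\<in>A. f j)::complex) powr z = (\<Prod>j\<in>A. of_nat (f j) powr z)"
  using assms
proof (induction A rule: finite_induct)
  case empty then show ?case by (simp add: nat_powr_exp)
next
  case (insert x F)
  have "(\<Prod>j\<in>F. f j) > 0" using insert by (simp add: prod_pos)
  have "(of_nat (\<Prod>j\<in>insert x F. f j)::complex) powr z = of_nat (f x * (\<Prod>j\<in>F. f j)) powr z"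
    by (simp only: prod.insert[OF insert(1,2)])
  also have "\<dots> = of_nat (f x) powr z * of_nat (\<Prod>j\<in>F. f j) powr z"
    using \<open>(\<Prod>j\<in>F. f j) > 0\<close> insert.prems by (intro nat_powr_mult) auto
  finally show ?case using insert by simp
qed

lemma nat_powr_power:
  assumes "m > 0"
  shows "(of_nat (m^k)::complex) powr z = (of_nat m powr z)^k"
proof -
  have mk: "m^k > 0" using assms by simp
  show ?thesis
  unfolding nat_powr_exp[OF assms] nat_powr_exp[OF mk] using assms
  by (simp add: ln_realpow exp_of_nat_mult[symmetric] algebra_simps)
qed

lemma PiE_nonneg_summable:
  fixes f :: "'a \<Rightarrow> 'b \<Rightarrow> real"
  assumes fin: "finite A" and nn: "\<And>x y. x\<in>A \<Longrightarrow> f x y \<ge> 0"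
    and sm: "\<And>x. x \<in> A \<Longrightarrow> f x summable_on B x"
  shows "(\<lambda>g. \<Prod>x\<in>A. f x (g x)) summable_on PiE A B"
proof (rule nonneg_bdd_above_summable_on)
  show "\<And>g. g \<in> PiE A B \<Longrightarrow> 0 \<le> (\<Prod>x\<in>A. f x (g x))" using nn by (simp add: prod_nonneg)
  show "bdd_above (sum (\<lambda>g. \<Prod>x\<in>A. f x (g x)) ` {F. F \<subseteq> PiE A B \<and> finite F})"
  proof (rule bdd_aboveI, clarsimp)
    fix P assume P: "P \<subseteq> PiE A B" "finite P"
    define B' where "B' x = (\<lambda>p. p x) ` P" for x
    have finB': "finite (B' x)" for x using P by (simp add: B'_def)
    have "P \<subseteq> PiE A B'" using P by (auto simp: B'_def PiE_def Pi_def)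
    then have "(\<Sum>g\<in>P. \<Prod>x\<in>A. f x (g x)) \<le> (\<Sum>g\<in>PiE A B'. \<Prod>x\<in>A. f x (g x))"
      using nn P by (intro sum_mono2 finite_PiE fin finB') (auto simp: prod_nonneg PiE_def)
    also have "\<dots> = (\<Prod>x\<in>A. \<Sum>y\<in>B' x. f x y)"
      by (rule prod_sum_PiE[symmetric]) (use fin finB' in auto)
    also have "\<dots> \<le> (\<Prod>x\<in>A. infsum (f x) (B x))"
    proof (rule prod_mono, intro conjI)
      fix x assume x: "x \<in> A"
      show "0 \<le> (\<Sum>y\<in>B' x. f x y)" using nn x by (simp add: sum_nonneg)
      have "B' x \<subseteq> B x" using P x by (auto simp: B'_def PiE_def Pi_def)
      then show "(\<Sum>y\<in>B' x. f x y) \<le> infsum (f x) (B x)"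
        using sm[OF x] nn x finB' by (intro finite_sum_le_infsum) auto
    qed
    finally show "(\<Sum>g\<in>P. \<Prod>x\<in>A. f x (g x)) \<le> (\<Prod>x\<in>A. infsum (f x) (B x))" .
  qed
qed




definition psi :: "(nat \<Rightarrow> complex) \<Rightarrow> complex \<Rightarrow> complex" where
  "psi c s = (\<Sum>\<^sub>\<infinity>n\<in>{2..}. c n * of_nat n powr (-s))"
definition SS :: "(nat \<Rightarrow> complex) \<Rightarrow> real" where
  "SS c = (\<Sum>\<^sub>\<infinity>n\<in>{2..}. norm (c n))"
definition JJ :: "(nat \<times> (nat \<Rightarrow> nat)) set" where
  "JJ = Sigma UNIV (\<lambda>k. PiE {..<k} (\<lambda>_. {2..}))"
definition WW :: "(nat \<Rightarrow> complex) \<Rightarrow> nat \<Rightarrow> nat \<times> (nat \<Rightarrow> nat) \<Rightarrow> complex" where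
  "WW c m j = (case j of (k,p) \<Rightarrow> of_nat m powr (- c 1) * (- of_real (ln (real m)))^k / of_nat (fact k)
      * (\<Prod>i<k. c (p i)))"
definition LL :: "nat \<Rightarrow> nat \<Rightarrow> nat \<times> (nat \<Rightarrow> nat) \<Rightarrow> nat" where
  "LL c0 m j = (case j of (k,p) \<Rightarrow> m^c0 * (\<Prod>i<k. p i))"

lemma exp_has_sum_real:
  fixes x :: real
  assumes "x \<ge> 0" shows "((\<lambda>n. x^n / fact n) has_sum exp x) (UNIV::nat set)"
proof -
  have "(\<lambda>n. x^n /\<^sub>R fact n) sums exp x" by (rule exp_converges)
  moreover have "(\<lambda>n. x^n /\<^sub>R fact n) = (\<lambda>n. x^n / fact n)"
    by (auto simp: fun_eq_iff real_scaleR_def divide_inverse mult.commute)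
  ultimately have "(\<lambda>n. x^n / fact n) sums exp x" by simp
  then show ?thesis using assms by (intro sums_nonneg_imp_has_sum) auto
qed

lemma exp_has_sum_complex:
  "((\<lambda>n. x^n / of_nat (fact n)) has_sum exp x) (UNIV::nat set)" for x :: complex
proof -
  have s: "(\<lambda>n. x^n /\<^sub>R fact n) sums exp x" by (rule exp_converges)
  have "summable (\<lambda>n. norm (x^n /\<^sub>R fact n))"
    using summable_exp_generic[of "norm x"] by (simp add: norm_power)
  then have "((\<lambda>n. x^n /\<^sub>R fact n) has_sum exp x) UNIV" using s by (rule norm_summable_imp_has_sum)
  then show ?thesis by (simp add: scaleR_conv_of_real divide_inverse_commute)
qed

lemma LL_pos: "m \<ge> 1 \<Longrightarrow> j \<in> JJ \<Longrightarrow> LL c0 m j \<ge> 1"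
  unfolding LL_def JJ_def
  by (auto simp: PiE_def Pi_def Suc_le_eq intro!: prod_pos) (metis less_le_trans pos2)

lemma K1:
  assumes summ: "(\<lambda>n. norm (c n)) summable_on {2..}" and m: "m \<ge> 1"
  shows "((\<lambda>j. norm (WW c m j)) has_sum (real m powr (- Re (c 1)) * exp (ln (real m) * SS c))) JJ"
proof -
  define L where "L = ln (real m)"
  have L0: "L \<ge> 0" unfolding L_def using m by simp
  define C where "C = real m powr (- Re (c 1))"
  have nW: "norm (WW c m (k,p)) = C * L^k / fact k * (\<Prod>i<k. norm (c (p i)))" for k p
    unfolding WW_def C_def L_def using m L0
    by (simp add: norm_mult norm_divide norm_power prod_norm norm_powr_real_powr L_def)
  have inner: "((\<lambda>p. norm (WW c m (k,p))) has_sum (C * L^k / fact k * SS c ^ k)) (PiE {..<k} (\<lambda>_. {2..}))" for k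
  proof -
    have sm: "(\<lambda>p. \<Prod>i<k. norm (c (p i))) summable_on PiE {..<k} (\<lambda>_. {2..})"
      by (rule PiE_nonneg_summable) (use summ in auto)
    have "infsum (\<lambda>p. \<Prod>i<k. norm (c (p i))) (PiE {..<k} (\<lambda>_. {2..})) = (\<Prod>i<k. SS c)"
      unfolding SS_def
      by (rule infsum_prod_PiE_abs[where f="\<lambda>i y. norm (c y)"]) (use summ in auto)
    then have "((\<lambda>p. \<Prod>i<k. norm (c (p i))) has_sum SS c ^ k) (PiE {..<k} (\<lambda>_. {2..}))"
      using sm has_sum_infsum by fastforce
    from has_sum_cmult_right[OF this, of "C * L^k / fact k"] show ?thesis by (simp add: nW)
  qed
  have outer: "((\<lambda>k. C * L^k / fact k * SS c ^ k) has_sum (C * exp (L * SS c))) UNIV"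
  proof -
    have "SS c \<ge> 0" unfolding SS_def by (simp add: infsum_nonneg)
    then have "((\<lambda>k. (L * SS c)^k / fact k) has_sum exp (L * SS c)) UNIV"
      using L0 by (intro exp_has_sum_real) simp
    from has_sum_cmult_right[OF this, of C] show ?thesis
      by (simp add: power_mult_distrib mult_ac)
  qed
  have "(\<lambda>j. norm (WW c m j)) summable_on JJ"
    unfolding JJ_def
    by (rule summable_on_SigmaI[OF inner]) (use outer has_sum_imp_summable in auto)
  then have "((\<lambda>j. norm (WW c m j)) has_sum (C * exp (L * SS c))) JJ"
    unfolding JJ_def using inner outer by (intro has_sum_SigmaI) auto
  then show ?thesis unfolding C_def L_def .
qed




lemma cterm_summ:
  assumes summ: "(\<lambda>n. norm (c n)) summable_on {2..}" and s: "0 \<le> Re s"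
  shows "(\<lambda>n. norm (c n * of_nat n powr (-s))) summable_on {2..}"
  by (rule summable_on_comparison_test[OF summ])
     (use norm_nat_powr_le1[OF _ s] in \<open>auto simp: norm_mult intro: mult_left_le\<close>)

lemma K2:
  assumes summ: "(\<lambda>n. norm (c n)) summable_on {2..}" and m: "m \<ge> 1" and s: "0 \<le> Re s"
  shows "((\<lambda>j. WW c m j * of_nat (LL c0 m j) powr (-s)) has_sum
           (of_nat m powr (-(of_nat c0 * s + c 1 + psi c s)))) JJ"
proof -
  define Lc :: complex where "Lc = of_real (ln (real m))"
  define A where "A k = of_nat m powr (- c 1) * (- Lc)^k / of_nat (fact k) * (of_nat m powr (-s))^c0" for k
  have m0: "m > 0" using m by simp
  have tm: "WW c m (k,p) * of_nat (LL c0 m (k,p)) powr (-s) = A k * (\<Prod>i<k. c (p i) * of_nat (p i) powr (-s))"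
    if "p \<in> PiE {..<k} (\<lambda>_. {2..})" for k p
  proof -
    have pp: "\<And>i. i \<in> {..<k} \<Longrightarrow> p i > 0" using that by (auto simp: PiE_def Pi_def)
    have "(\<Prod>i<k. p i) > 0" using pp by (simp add: prod_pos)
    then have "of_nat (LL c0 m (k,p)) powr (-s) = (of_nat m powr (-s))^c0 * (\<Prod>i<k. of_nat (p i) powr (-s))"
      unfolding LL_def using m0 pp
      using nat_powr_prod[of "{..<k}" p "-s"]
      by (simp add: nat_powr_mult nat_powr_power del: of_nat_mult of_nat_prod of_nat_power)
    then show ?thesis unfolding WW_def A_def Lc_def by (simp add: prod.distrib mult_ac)
  qed
  have nsum: "(\<lambda>y. norm (c y * of_nat y powr (-s))) summable_on {2..}" by (rule cterm_summ[OF summ s])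
  have inner: "((\<lambda>p. WW c m (k,p) * of_nat (LL c0 m (k,p)) powr (-s)) has_sum (A k * psi c s ^ k))
       (PiE {..<k} (\<lambda>_. {2..}))" for k
  proof -
    have sm: "(\<lambda>p. \<Prod>i<k. norm (c (p i) * of_nat (p i) powr (-s))) summable_on PiE {..<k} (\<lambda>_. {2..})"
      by (rule PiE_nonneg_summable) (use nsum in auto)
    have sm2: "(\<lambda>p. \<Prod>i<k. c (p i) * of_nat (p i) powr (-s)) summable_on PiE {..<k} (\<lambda>_. {2..})"
      unfolding summable_on_iff_abs_summable_on_complex using sm by (simp add: prod_norm)
    have "infsum (\<lambda>p. \<Prod>i<k. c (p i) * of_nat (p i) powr (-s)) (PiE {..<k} (\<lambda>_. {2..})) = (\<Prod>i<k. psi c s)"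
      unfolding psi_def
      by (rule infsum_prod_PiE_abs[where f="\<lambda>i y. c y * of_nat y powr (-s)"]) (use nsum in auto)
    then have "((\<lambda>p. \<Prod>i<k. c (p i) * of_nat (p i) powr (-s)) has_sum psi c s ^ k) (PiE {..<k} (\<lambda>_. {2..}))"
      using sm2 has_sum_infsum by fastforce
    from has_sum_cmult_right[OF this, of "A k"] show ?thesis
      by (rule has_sum_cong[THEN iffD1, rotated]) (simp add: tm)
  qed
  have outer: "((\<lambda>k. A k * psi c s ^ k) has_sum
       (of_nat m powr (- c 1) * (of_nat m powr (-s))^c0 * exp (- Lc * psi c s))) UNIV"
  proof -
    have "((\<lambda>k. (- Lc * psi c s)^k / of_nat (fact k)) has_sum exp (- Lc * psi c s)) UNIV"
      by (rule exp_has_sum_complex)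
    from has_sum_cmult_right[OF this, of "of_nat m powr (- c 1) * (of_nat m powr (-s))^c0"]
    show ?thesis
    proof (rule has_sum_cong[THEN iffD1, rotated])
      fix k :: nat
      show "of_nat m powr (- c 1) * (of_nat m powr (-s))^c0 * ((- Lc * psi c s)^k / of_nat (fact k))
            = A k * psi c s ^ k"
        by (subst power_mult_distrib) (simp add: A_def)
    qed
  qed
  have "(\<lambda>j. WW c m j * of_nat (LL c0 m j) powr (-s)) summable_on JJ"
    unfolding summable_on_iff_abs_summable_on_complex
  proof (rule summable_on_comparison_test)
    show "(\<lambda>j. norm (WW c m j)) summable_on JJ" using K1[OF summ m] has_sum_imp_summable by blast
    fix j assume j: "j \<in> JJ"
    show "norm (WW c m j * of_nat (LL c0 m j) powr (-s)) \<le> norm (WW c m j)"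
      using norm_nat_powr_le1[OF LL_pos[OF m j] s] by (auto simp: norm_mult intro: mult_left_le)
  qed simp
  then have hs: "((\<lambda>j. WW c m j * of_nat (LL c0 m j) powr (-s)) has_sum
       (of_nat m powr (- c 1) * (of_nat m powr (-s))^c0 * exp (- Lc * psi c s))) JJ"
    unfolding JJ_def using inner outer by (intro has_sum_SigmaI) auto
  have "of_nat m powr (-(of_nat c0 * s + c 1 + psi c s)) =
        of_nat m powr (- c 1) * (of_nat m powr (-s))^c0 * exp (- Lc * psi c s)"
    unfolding nat_powr_exp[OF m0] Lc_def
    by (simp add: exp_of_nat_mult[symmetric] exp_add[symmetric] algebra_simps exp_diff)
  with hs show ?thesis by simp
qed




lemma diag_subseq:
  fixes a :: "nat \<Rightarrow> nat \<Rightarrow> complex"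
  assumes B: "\<And>k n. norm (a k n) \<le> B"
  shows "\<exists>r \<alpha>. strict_mono r \<and> (\<forall>n. (\<lambda>k. a (r k) n) \<longlonglongrightarrow> \<alpha> n)"
proof -
  define K :: "(nat \<Rightarrow> complex) set" where "K = PiE UNIV (\<lambda>_. cball 0 B)"
  have "compactin (product_topology (\<lambda>_. euclidean) UNIV) K"
    unfolding K_def compactin_PiE by auto
  then have "compact K" by (simp add: euclidean_product_topology compactin_euclidean_iff)
  then have "seq_compact K" by (rule compact_imp_seq_compact)
  moreover have "\<forall>k. a k \<in> K" using B by (auto simp: K_def)
  ultimately obtain l r where r: "strict_mono r" and lim: "(a \<circ> r) \<longlonglongrightarrow> l"
    unfolding seq_compact_def by blast
  have "(\<lambda>k. a (r k) n) \<longlonglongrightarrow> l n" for n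
  proof -
    have "continuous_on UNIV (\<lambda>x::nat\<Rightarrow>complex. x n)" by simp
    then have "isCont (\<lambda>x::nat\<Rightarrow>complex. x n) l" using continuous_on_eq_continuous_at open_UNIV UNIV_I by blast
    from isCont_tendsto_compose[OF this lim] show ?thesis by (simp add: o_def)
  qed
  with r show ?thesis by blast
qed



definition EE :: "(nat \<Rightarrow> complex) \<Rightarrow> nat \<Rightarrow> real" where
  "EE c m = real m powr (- Re (c 1)) * exp (ln (real m) * SS c)"

lemma comp_family:
  assumes summ: "(\<lambda>n. norm (c n)) summable_on {2..}"
    and Esum: "(\<lambda>m. norm (d m) * EE c m) summable_on {1..}"
    and h: "\<And>s. 0 \<le> Re s \<Longrightarrow> h s = (\<Sum>\<^sub>\<infinity>m\<in>{1..}. d m * of_nat m powr (-(of_nat c0 * s + c 1 + psi c s)))"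
  shows "h \<in> wd_algebra \<and> wd_norm h \<le> (\<Sum>\<^sub>\<infinity>m\<in>{1..}. norm (d m) * EE c m)"
proof -
  define I where "I = Sigma {1::nat..} (\<lambda>_. JJ)"
  define w where "w i = d (fst i) * WW c (fst i) (snd i)" for i
  define lam where "lam i = LL c0 (fst i) (snd i)" for i
  have innerN: "((\<lambda>j. norm (w (m,j))) has_sum norm (d m) * EE c m) JJ" if "m \<in> {1..}" for m
  proof -
    have "m \<ge> 1" using that by simp
    from has_sum_cmult_right[OF K1[OF summ this], of "norm (d m)"]
    show ?thesis unfolding w_def fst_conv snd_conv norm_mult EE_def .
  qed
  have sN: "(\<lambda>i. norm (w i)) summable_on I"
    unfolding I_def by (rule summable_on_SigmaI[OF innerN Esum]) auto
  have hN: "((\<lambda>i. norm (w i)) has_sum (\<Sum>\<^sub>\<infinity>m\<in>{1..}. norm (d m) * EE c m)) I"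
    unfolding I_def using innerN Esum sN unfolding I_def
    by (intro has_sum_SigmaI) (auto intro: has_sum_infsum)
  have pos: "lam i \<ge> 1" if "i \<in> I" for i
    using that LL_pos by (auto simp: I_def lam_def)
  have hval: "h s = (\<Sum>\<^sub>\<infinity>i\<in>I. w i * of_nat (lam i) powr (-s))" if s: "0 \<le> Re s" for s
  proof -
    have innerV: "((\<lambda>j. w (m,j) * of_nat (lam (m,j)) powr (-s)) has_sum
        d m * of_nat m powr (-(of_nat c0 * s + c 1 + psi c s))) JJ" if "m \<in> {1..}" for m
    proof -
      have "m \<ge> 1" using that by simp
      from has_sum_cmult_right[OF K2[OF summ this s, of c0], of "d m"]
      show ?thesis unfolding w_def lam_def fst_conv snd_conv mult.assoc .
    qed
    have sV: "(\<lambda>i. w i * of_nat (lam i) powr (-s)) summable_on I"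
      unfolding summable_on_iff_abs_summable_on_complex
      by (rule summable_on_comparison_test[OF sN])
         (use norm_nat_powr_le1[OF pos s] in \<open>auto simp: norm_mult intro: mult_left_le\<close>)
    have "((\<lambda>m. d m * of_nat m powr (-(of_nat c0 * s + c 1 + psi c s))) has_sum
             (\<Sum>\<^sub>\<infinity>i\<in>I. w i * of_nat (lam i) powr (-s))) {1..}"
    proof -
      have hI: "((\<lambda>i. w i * of_nat (lam i) powr (-s)) has_sum (\<Sum>\<^sub>\<infinity>i\<in>I. w i * of_nat (lam i) powr (-s))) (Sigma {1..} (\<lambda>_. JJ))"
        using has_sum_infsum[OF sV] unfolding I_def .
      show ?thesis by (rule has_sum_Sigma'[OF hI innerV]) 
    qed
    then show ?thesis using h[OF s] by (simp add: infsumI)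
  qed
  have "h \<in> wd_algebra \<and> wd_norm h \<le> (\<Sum>\<^sub>\<infinity>i\<in>I. norm (w i))"
    by (rule rep_from_family[OF sN pos hval]) auto
  then show ?thesis using hN by (simp add: infsumI)
qed




lemma dv_split:
  assumes summ: "(\<lambda>n. norm (c n)) summable_on {2..}" and s: "0 \<le> Re s"
  shows "dirichlet_val c s = c 1 + psi c s"
proof -
  have sm: "(\<lambda>n. c n * of_nat n powr (-s)) summable_on {2..}"
    using cterm_summ[OF summ s] summable_on_iff_abs_summable_on_complex by blast
  have e: "{1::nat..} = insert 1 {2..}" by auto
  have one: "(of_nat 1 :: complex) powr (-s) = 1" using nat_powr_exp[of 1 "-s"] by simp
  show ?thesis unfolding dirichlet_val_def psi_def e
    by (subst infsum_insert[OF sm]) (auto simp: one)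
qed

lemma psi_bound:
  assumes summ: "(\<lambda>n. norm (c n)) summable_on {2..}" and s: "0 \<le> Re s"
  shows "norm (psi c s) \<le> SS c"
proof -
  have "norm (psi c s) \<le> (\<Sum>\<^sub>\<infinity>n\<in>{2..}. norm (c n * of_nat n powr (-s)))"
    unfolding psi_def by (rule norm_infsum_bound) (rule cterm_summ[OF summ s])
  also have "\<dots> \<le> SS c" unfolding SS_def
    by (rule infsum_mono[OF cterm_summ[OF summ s] summ])
       (use norm_nat_powr_le1[OF _ s] in \<open>auto simp: norm_mult intro: mult_left_le\<close>)
  finally show ?thesis .
qed

lemma EE_eq: "m \<ge> 1 \<Longrightarrow> EE c m = real m powr (SS c - Re (c 1))"
  unfolding EE_def by (simp add: powr_def powr_add[symmetric] exp_add[symmetric] algebra_simps)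

lemma EE_le1: "m \<ge> 1 \<Longrightarrow> SS c \<le> Re (c 1) \<Longrightarrow> EE c m \<le> 1"
  using powr_mono[of "SS c - Re (c 1)" 0 "real m"] by (simp add: EE_eq)

lemma EE_nonneg: "EE c m \<ge> 0" unfolding EE_def by simp

lemma Re_phi:
  assumes summ: "(\<lambda>n. norm (c n)) summable_on {2..}" and s: "0 \<le> Re s"
    and le: "SS c \<le> Re (c 1)"
  shows "symbol_phi c0 c s = of_nat c0 * s + c 1 + psi c s" and "Re (symbol_phi c0 c s) \<ge> 0"
proof -
  show e: "symbol_phi c0 c s = of_nat c0 * s + c 1 + psi c s"
    unfolding symbol_phi_def dv_split[OF summ s] by simp
  have "- Re (psi c s) \<le> norm (psi c s)" using abs_Re_le_cmod[of "psi c s"] by linarith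
  moreover have "real c0 * Re s \<ge> 0" using s by simp
  ultimately show "Re (symbol_phi c0 c s) \<ge> 0" using psi_bound[OF summ s] le unfolding e by simp
qed

lemma comp_formula:
  assumes summ: "(\<lambda>n. norm (c n)) summable_on {2..}" and le: "SS c \<le> Re (c 1)"
    and rep: "wd_rep a f" and s: "0 \<le> Re s"
  shows "(f \<circ> symbol_phi c0 c) s = (\<Sum>\<^sub>\<infinity>m\<in>{1..}. a m * of_nat m powr (-(of_nat c0 * s + c 1 + psi c s)))"
  using rep Re_phi[OF summ s le, of c0] unfolding wd_rep_def dirichlet_val_def by auto

lemma Esum_le:
  assumes "(\<lambda>m. norm (d m)) summable_on {1..}" and le: "SS c \<le> Re (c 1)"
  shows "(\<lambda>m. norm (d m) * EE c m) summable_on {1..}"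
    and "(\<Sum>\<^sub>\<infinity>m\<in>{1..}. norm (d m) * EE c m) \<le> (\<Sum>\<^sub>\<infinity>m\<in>{1..}. norm (d m))"
proof -
  show sm: "(\<lambda>m. norm (d m) * EE c m) summable_on {1..}"
    by (rule summable_on_comparison_test[OF assms(1)])
       (use EE_le1[OF _ le] EE_nonneg in \<open>auto intro: mult_left_le\<close>)
  show "(\<Sum>\<^sub>\<infinity>m\<in>{1..}. norm (d m) * EE c m) \<le> (\<Sum>\<^sub>\<infinity>m\<in>{1..}. norm (d m))"
    by (rule infsum_mono[OF sm assms(1)]) (use EE_le1[OF _ le] in \<open>auto intro: mult_left_le\<close>)
qed

lemma bounded_rep:
  assumes summ: "(\<lambda>n. norm (c n)) summable_on {2..}" and le: "SS c \<le> Re (c 1)"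
    and rep: "wd_rep a f"
  shows "f \<circ> symbol_phi c0 c \<in> wd_algebra \<and> wd_norm (f \<circ> symbol_phi c0 c) \<le> (\<Sum>\<^sub>\<infinity>n\<in>{1..}. norm (a n))"
proof -
  have as: "(\<lambda>m. norm (a m)) summable_on {1..}" using rep unfolding wd_rep_def by simp
  have "f \<circ> symbol_phi c0 c \<in> wd_algebra \<and>
        wd_norm (f \<circ> symbol_phi c0 c) \<le> (\<Sum>\<^sub>\<infinity>m\<in>{1..}. norm (a m) * EE c m)"
    by (rule comp_family[OF summ Esum_le(1)[OF as le]]) (rule comp_formula[OF summ le rep])
  with Esum_le(2)[OF as le] show ?thesis by linarith
qed

lemma wd_norm_nonneg: "h \<in> wd_algebra \<Longrightarrow> wd_norm h \<ge> 0"
  unfolding wd_norm_def wd_algebra_def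
  by (rule cInf_greatest) (auto intro: infsum_nonneg)




lemma maps_into:
  assumes summ: "(\<lambda>n. norm (c n)) summable_on {2..}" and le: "SS c \<le> Re (c 1)"
  shows "\<forall>f\<in>wd_algebra. f \<circ> symbol_phi c0 c \<in> wd_algebra"
  using bounded_rep[OF summ le] unfolding wd_algebra_def by blast

lemma bounded_part:
  assumes summ: "(\<lambda>n. norm (c n)) summable_on {2..}" and le: "SS c \<le> Re (c 1)"
  shows "comp_op_bounded (symbol_phi c0 c)"
  unfolding comp_op_bounded_def
proof (intro conjI maps_into[OF summ le] exI[of _ 1] ballI)
  fix f assume f: "f \<in> wd_algebra"
  have ne: "{(\<Sum>\<^sub>\<infinity>n\<in>{1..}. norm (a n)) | a. wd_rep a f} \<noteq> {}" using f unfolding wd_algebra_def by auto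
  have "wd_norm (f \<circ> symbol_phi c0 c) \<le> wd_norm f"
    unfolding wd_norm_def[of f]
    by (rule cInf_greatest[OF ne]) (use bounded_rep[OF summ le] in auto)
  then show "wd_norm (f \<circ> symbol_phi c0 c) \<le> 1 * wd_norm f" by simp
qed




lemma compact_part:
  assumes summ: "(\<lambda>n. norm (c n)) summable_on {2..}" and lt: "SS c < Re (c 1)"
  shows "comp_op_compact (symbol_phi c0 c)"
  unfolding comp_op_compact_def
proof (intro conjI allI impI)
  have le: "SS c \<le> Re (c 1)" using lt by simp
  define \<delta> where "\<delta> = Re (c 1) - SS c"
  have d0: "\<delta> > 0" using lt by (simp add: \<delta>_def)
  have EEd: "EE c m = real m powr (-\<delta>)" if "m \<ge> 1" for m
    using EE_eq[OF that, of c] by (simp add: \<delta>_def)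
  show "\<forall>f\<in>wd_algebra. f \<circ> symbol_phi c0 c \<in> wd_algebra" by (rule maps_into[OF summ le])
  fix F :: "nat \<Rightarrow> complex \<Rightarrow> complex"
  assume FF: "\<forall>k. F k \<in> wd_algebra \<and> wd_norm (F k) \<le> 1"
  have "\<forall>k. \<exists>a. wd_rep a (F k) \<and> (\<Sum>\<^sub>\<infinity>n\<in>{1..}. norm (a n)) < 2"
  proof
    fix k
    let ?X = "{(\<Sum>\<^sub>\<infinity>n\<in>{1..}. norm (a n)) | a. wd_rep a (F k)}"
    have ne: "?X \<noteq> {}" using FF unfolding wd_algebra_def by auto
    have "Inf ?X \<le> 1" using FF unfolding wd_norm_def by blast
    then have "Inf ?X < 2" by linarith
    from cInf_lessD[OF ne this] show "\<exists>a. wd_rep a (F k) \<and> (\<Sum>\<^sub>\<infinity>n\<in>{1..}. norm (a n)) < 2" by auto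
  qed
  then obtain a where a1: "\<And>k. wd_rep (a k) (F k)" and a2: "\<And>k. (\<Sum>\<^sub>\<infinity>n\<in>{1..}. norm (a k n)) < 2"
    by metis
  have asum: "(\<lambda>n. norm (a k n)) summable_on {1..}" for k using a1[of k] unfolding wd_rep_def by simp
  have fin_le: "(\<Sum>n\<in>G. norm (a k n)) \<le> 2" if "finite G" "G \<subseteq> {1..}" for G k
  proof -
    have "(\<Sum>n\<in>G. norm (a k n)) \<le> (\<Sum>\<^sub>\<infinity>n\<in>{1..}. norm (a k n))"
      by (rule finite_sum_le_infsum[OF asum[of k] that]) simp
    then show ?thesis using a2[of k] by linarith
  qed
  have abnd: "norm (a k n) \<le> 2" if "n \<ge> 1" for k n
    using fin_le[of "{n}" k] that by simp
  define b where "b k n = (if n \<ge> 1 then a k n else 0)" for k n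
  have "norm (b k n) \<le> 2" for k n using abnd by (simp add: b_def)
  from diag_subseq[of b, OF this] obtain r \<alpha> where r: "strict_mono r"
    and conv: "\<forall>n. (\<lambda>k. b (r k) n) \<longlonglongrightarrow> \<alpha> n" by blast
  have convA: "(\<lambda>k. a (r k) n) \<longlonglongrightarrow> \<alpha> n" if "n \<ge> 1" for n
    using spec[OF conv, of n] that by (simp add: b_def)
  have finA: "(\<Sum>n\<in>G. norm (\<alpha> n)) \<le> 2" if G: "finite G" "G \<subseteq> {1..}" for G
  proof (rule LIMSEQ_le_const2)
    show "(\<lambda>k. \<Sum>n\<in>G. norm (a (r k) n)) \<longlonglongrightarrow> (\<Sum>n\<in>G. norm (\<alpha> n))"
      using G by (intro tendsto_sum tendsto_norm convA) auto
    show "\<exists>N. \<forall>k\<ge>N. (\<Sum>n\<in>G. norm (a (r k) n)) \<le> 2" using fin_le[OF G] by blast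
  qed
  have \<alpha>sum: "(\<lambda>n. norm (\<alpha> n)) summable_on {1..}"
    by (rule nonneg_bdd_above_summable_on) (use finA in \<open>auto intro!: bdd_aboveI[where M=2]\<close>)
  have \<alpha>le: "(\<Sum>\<^sub>\<infinity>n\<in>{1..}. norm (\<alpha> n)) \<le> 2"
    by (rule infsum_le_finite_sums[OF \<alpha>sum]) (use finA in auto)
  define g where "g s = (\<Sum>\<^sub>\<infinity>m\<in>{1..}. \<alpha> m * of_nat m powr (-(of_nat c0 * s + c 1 + psi c s)))" for s
  have g: "g \<in> wd_algebra"
    using comp_family[OF summ Esum_le(1)[OF \<alpha>sum le], of g c0] g_def by blast
  define x where "x k m = norm (a (r k) m - \<alpha> m)" for k m
  have xsum: "(\<lambda>m. x k m) summable_on {1..}" for k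
    unfolding x_def
    by (rule summable_on_comparison_test[OF summable_on_add[OF asum[of "r k"] \<alpha>sum]])
       (auto intro: norm_triangle_ineq4)
  have xle: "(\<Sum>\<^sub>\<infinity>m\<in>{1..}. x k m) \<le> 4" for k
  proof -
    have "(\<Sum>\<^sub>\<infinity>m\<in>{1..}. x k m) \<le> (\<Sum>\<^sub>\<infinity>m\<in>{1..}. norm (a (r k) m) + norm (\<alpha> m))"
      by (rule infsum_mono[OF xsum summable_on_add[OF asum[of "r k"] \<alpha>sum]])
         (auto simp: x_def intro: norm_triangle_ineq4)
    also have "\<dots> = (\<Sum>\<^sub>\<infinity>m\<in>{1..}. norm (a (r k) m)) + (\<Sum>\<^sub>\<infinity>m\<in>{1..}. norm (\<alpha> m))"
      by (rule infsum_add[OF asum \<alpha>sum])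
    also have "\<dots> \<le> 4" using a2[of "r k"] \<alpha>le by simp
    finally show ?thesis .
  qed
  define e where "e k = (\<Sum>\<^sub>\<infinity>m\<in>{1..}. x k m * EE c m)" for k
  have Dk: "(\<lambda>s. (F (r k) \<circ> symbol_phi c0 c) s - g s) \<in> wd_algebra \<and>
            wd_norm (\<lambda>s. (F (r k) \<circ> symbol_phi c0 c) s - g s) \<le> e k" for k
    unfolding e_def x_def
  proof (rule comp_family[OF summ Esum_le(1)[OF xsum[unfolded x_def] le]])
    fix s :: complex assume s: "0 \<le> Re s"
    define z where "z = of_nat c0 * s + c 1 + psi c s"
    have z0: "0 \<le> Re z" using Re_phi[OF summ s le, of c0] by (simp add: z_def)
    have pb: "norm (of_nat m powr (-z)) \<le> 1" if "m \<in> {1..}" for m :: nat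
      using norm_nat_powr_le1[OF _ z0] that by simp
    have s1: "(\<lambda>m. a (r k) m * of_nat m powr (-z)) summable_on {1..}"
      unfolding summable_on_iff_abs_summable_on_complex
      by (rule summable_on_comparison_test[OF asum[of "r k"]])
         (use pb in \<open>auto simp: norm_mult intro: mult_left_le\<close>)
    have s2: "(\<lambda>m. \<alpha> m * of_nat m powr (-z)) summable_on {1..}"
      unfolding summable_on_iff_abs_summable_on_complex
      by (rule summable_on_comparison_test[OF \<alpha>sum])
         (use pb in \<open>auto simp: norm_mult intro: mult_left_le\<close>)
    have "(F (r k) \<circ> symbol_phi c0 c) s - g s =
          (\<Sum>\<^sub>\<infinity>m\<in>{1..}. a (r k) m * of_nat m powr (-z)) - (\<Sum>\<^sub>\<infinity>m\<in>{1..}. \<alpha> m * of_nat m powr (-z))"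
      using comp_formula[OF summ le a1[of "r k"] s, of c0] by (simp add: g_def z_def)
    also have "\<dots> = (\<Sum>\<^sub>\<infinity>m\<in>{1..}. (a (r k) m - \<alpha> m) * of_nat m powr (-z))"
    proof -
      have h2: "((\<lambda>m. - (\<alpha> m * of_nat m powr (-z))) has_sum - (\<Sum>\<^sub>\<infinity>m\<in>{1..}. \<alpha> m * of_nat m powr (-z))) {1..}"
        using has_sum_infsum[OF s2] by (simp add: has_sum_uminus)
      from has_sum_add[OF has_sum_infsum[OF s1] h2] show ?thesis
        by (simp add: infsumI left_diff_distrib)
    qed
    finally show "(F (r k) \<circ> symbol_phi c0 c) s - g s =
          (\<Sum>\<^sub>\<infinity>m\<in>{1..}. (a (r k) m - \<alpha> m) * of_nat m powr (-(of_nat c0 * s + c 1 + psi c s)))"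
      by (simp add: z_def)
  qed
  have elim: "e \<longlonglongrightarrow> 0"
  proof (rule LIMSEQ_I)
    fix \<epsilon> :: real assume \<epsilon>: "0 < \<epsilon>"
    have "((\<lambda>M. real M powr (-\<delta>)) \<longlongrightarrow> 0) sequentially"
      using d0 by (intro tendsto_neg_powr filterlim_real_sequentially) auto
    then have "eventually (\<lambda>M. real M powr (-\<delta>) < \<epsilon> / 8) sequentially"
      using \<epsilon> by (intro order_tendstoD) auto
    then obtain M where M: "real M powr (-\<delta>) < \<epsilon> / 8" "M \<ge> 1"
      unfolding eventually_sequentially by (metis le_add2 add.commute nat_le_linear)
    define T where "T k = (\<Sum>m\<in>{1..<M}. x k m)" for k
    have "T \<longlonglongrightarrow> 0" unfolding T_def x_def
    proof (rule tendsto_null_sum)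
      fix m assume "m \<in> {1..<M}"
      then have "(\<lambda>k. a (r k) m - \<alpha> m) \<longlonglongrightarrow> \<alpha> m - \<alpha> m" by (intro tendsto_diff convA tendsto_const) auto
      then show "(\<lambda>k. norm (a (r k) m - \<alpha> m)) \<longlonglongrightarrow> 0" using tendsto_norm_zero by force
    qed
    then have "eventually (\<lambda>k. T k < \<epsilon> / 2) sequentially" using \<epsilon> by (intro order_tendstoD) auto
    then obtain N where N: "\<And>k. k \<ge> N \<Longrightarrow> T k < \<epsilon> / 2" unfolding eventually_sequentially by blast
    have ebound: "e k \<le> T k + real M powr (-\<delta>) * 4" for k
    proof -
      have x0: "x k m \<ge> 0" for m by (simp add: x_def)
      have sI: "(\<lambda>m. if m < M then x k m else 0) summable_on {1..}"
      proof -
        have "(\<lambda>m. if m < M then x k m else 0) summable_on {1..<M}" by simp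
        moreover have "(\<lambda>m. if m < M then x k m else 0) summable_on {1..<M} \<longleftrightarrow>
              (\<lambda>m. if m < M then x k m else 0) summable_on {1..}"
          by (rule summable_on_cong_neutral) auto
        ultimately show ?thesis by simp
      qed
      have "e k \<le> (\<Sum>\<^sub>\<infinity>m\<in>{1..}. (if m < M then x k m else 0) + real M powr (-\<delta>) * x k m)"
        unfolding e_def
      proof (rule infsum_mono)
        show "(\<lambda>m. x k m * EE c m) summable_on {1..}"
          using Esum_le(1)[OF xsum[of k, unfolded x_def] le] unfolding x_def .
        show "(\<lambda>m. (if m < M then x k m else 0) + real M powr (-\<delta>) * x k m) summable_on {1..}"
          by (intro summable_on_add sI summable_on_cmult_right xsum)
        fix m :: nat assume m: "m \<in> {1..}"
        show "x k m * EE c m \<le> (if m < M then x k m else 0) + real M powr (-\<delta>) * x k m"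
        proof (cases "m < M")
          case True
          have "x k m * EE c m \<le> x k m" using EE_le1[of m c] m le x0 by (auto intro: mult_left_le)
          moreover have "real M powr (-\<delta>) * x k m \<ge> 0" using x0 by simp
          ultimately show ?thesis using True by simp
        next
          case False
          have "EE c m \<le> real M powr (-\<delta>)" using False m M d0
            by (simp add: EEd) (intro powr_mono2', auto)
          from mult_left_mono[OF this x0[of m]] show ?thesis using False by (simp add: mult.commute)
        qed
      qed
      also have "\<dots> = (\<Sum>\<^sub>\<infinity>m\<in>{1..}. (if m < M then x k m else 0)) + real M powr (-\<delta>) * (\<Sum>\<^sub>\<infinity>m\<in>{1..}. x k m)"
        by (subst infsum_add[OF sI summable_on_cmult_right[OF xsum]]) (simp add: infsum_cmult_right')
      also have "(\<Sum>\<^sub>\<infinity>m\<in>{1..}. (if m < M then x k m else 0)) = T k"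
      proof -
        have "(\<Sum>\<^sub>\<infinity>m\<in>{1..}. (if m < M then x k m else 0)) = (\<Sum>\<^sub>\<infinity>m\<in>{1..<M}. x k m)"
          by (rule infsum_cong_neutral) auto
        then show ?thesis by (simp add: T_def)
      qed
      also have "real M powr (-\<delta>) * (\<Sum>\<^sub>\<infinity>m\<in>{1..}. x k m) \<le> real M powr (-\<delta>) * 4"
        using xle[of k] by (intro mult_left_mono) auto
      finally show ?thesis by simp
    qed
    have e0: "e k \<ge> 0" for k unfolding e_def
      by (intro infsum_nonneg) (auto simp: x_def EE_nonneg)
    show "\<exists>no. \<forall>k\<ge>no. norm (e k - 0) < \<epsilon>"
    proof (intro exI allI impI)
      fix k assume "k \<ge> N"
      then have "e k < \<epsilon> / 2 + \<epsilon> / 2" using ebound[of k] N[of k] M(1) by linarith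
      then show "norm (e k - 0) < \<epsilon>" using e0[of k] by simp
    qed
  qed
  have "(\<lambda>k. wd_norm (\<lambda>s. (F (r k) \<circ> symbol_phi c0 c) s - g s)) \<longlonglongrightarrow> 0"
  proof (rule tendsto_sandwich[OF _ _ tendsto_const elim])
    show "\<forall>\<^sub>F k in sequentially. 0 \<le> wd_norm (\<lambda>s. (F (r k) \<circ> symbol_phi c0 c) s - g s)"
      using Dk wd_norm_nonneg by auto
    show "\<forall>\<^sub>F k in sequentially. wd_norm (\<lambda>s. (F (r k) \<circ> symbol_phi c0 c) s - g s) \<le> e k"
      using Dk by auto
  qed
  then show "\<exists>r g. strict_mono r \<and> g \<in> wd_algebra \<and>
           (\<lambda>k. wd_norm (\<lambda>s. (F (r k) \<circ> symbol_phi c0 c) s - g s)) \<longlonglongrightarrow> 0"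
    using r g by blast
qed


theorem corollary5:
  fixes c0 :: nat and c :: "nat \<Rightarrow> complex"
  assumes summ: "(\<lambda>n. norm (c n)) summable_on {2..}"
    and nonconst: "\<not> (\<exists>k. \<forall>s. 0 \<le> Re s \<longrightarrow> symbol_phi c0 c s = k)"
  shows "(Re (c 1) \<ge> (\<Sum>\<^sub>\<infinity>n\<in>{2..}. norm (c n)) \<longrightarrow> comp_op_bounded (symbol_phi c0 c)) \<and>
         (Re (c 1) > (\<Sum>\<^sub>\<infinity>n\<in>{2..}. norm (c n)) \<longrightarrow> comp_op_compact (symbol_phi c0 c))"
proof -
  have e: "(\<Sum>\<^sub>\<infinity>n\<in>{2..}. norm (c n)) = SS c" by (simp add: SS_def)
  show ?thesis unfolding e using bounded_part[OF summ] compact_part[OF summ] by blast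
qed

end
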